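(* Let $S$ be a semigroup with involution, $I\in\mathbb{H}$ an imaginary unit, and $\phi:S\to\mathbb{C}_I$. Then $\phi$ is complex positive definite (i.e. $\sum_{i,j=1}^n\overline{c_i}c_j\phi(s_i^*\circ s_j)\ge0$ for all $n$, $s_i\in S$, $c_i\in\mathbb{C}_I$) if and only if $\phi$ is quaternionic positive definite.
   Context: $\mathbb{H}$ is the real quaternion algebra. An imaginary unit is a quaternion $I$ with $\overline I=-I$ and $|I|=1$ (so $I^2=-1$); $\mathbb{C}_I=\mathbb{R}\oplus I\mathbb{R}$ is the corresponding complex slice. A semigroup with involution is a set $S$ with an associative binary operation $\circ$ with neutral element $e$ and a bijection $s\mapsto s^*$ with $(s^* )^*=s$, $(s\circ t)^*=t^*\circ s^*$. $\phi:S\to\mathbb{H}$ is quaternionic positive definite if $\sum_{i,j=1}^k \overline{q_i}\phi(s_i^*\circ s_j)q_j$ is a nonnegative real number for all $k$, $s_i\in S$, $q_i\in\mathbb{H}$. *)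

theory Defs
  imports Complex_Main
begin

datatype quat = Quat (QRe: real) (Im1: real) (Im2: real) (Im3: real)

instantiation quat :: ring_1
begin
definition "0 = Quat 0 0 0 0"
definition "1 = Quat 1 0 0 0"
definition "p + q = Quat (QRe p + QRe q) (Im1 p + Im1 q) (Im2 p + Im2 q) (Im3 p + Im3 q)"
definition "p - q = Quat (QRe p - QRe q) (Im1 p - Im1 q) (Im2 p - Im2 q) (Im3 p - Im3 q)"
definition "- q = Quat (- QRe q) (- Im1 q) (- Im2 q) (- Im3 q)"
definition "p * q = Quat
   (QRe p * QRe q - Im1 p * Im1 q - Im2 p * Im2 q - Im3 p * Im3 q)
   (QRe p * Im1 q + Im1 p * QRe q + Im2 p * Im3 q - Im3 p * Im2 q)
   (QRe p * Im2 q - Im1 p * Im3 q + Im2 p * QRe q + Im3 p * Im1 q)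
   (QRe p * Im3 q + Im1 p * Im2 q - Im2 p * Im1 q + Im3 p * QRe q)"
instance
  by standard (auto simp: zero_quat_def one_quat_def plus_quat_def minus_quat_def
      uminus_quat_def times_quat_def algebra_simps intro: quat.expand)
end

definition qreal :: "real \<Rightarrow> quat" where "qreal r = Quat r 0 0 0"
definition qcnj :: "quat \<Rightarrow> quat" where "qcnj q = Quat (QRe q) (- Im1 q) (- Im2 q) (- Im3 q)"
definition qnorm :: "quat \<Rightarrow> real" where
  "qnorm q = sqrt ((QRe q)\<^sup>2 + (Im1 q)\<^sup>2 + (Im2 q)\<^sup>2 + (Im3 q)\<^sup>2)"

definition imag_unit :: "quat \<Rightarrow> bool" where
  "imag_unit I \<longleftrightarrow> qcnj I = - I \<and> qnorm I = 1"

definition cslice :: "quat \<Rightarrow> quat set" where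
  "cslice I = {qreal a + qreal b * I | a b. True}"

text \<open>Semigroup with involution (S is the whole type 'a).\<close>
definition semigroup_involution :: "('a \<Rightarrow> 'a \<Rightarrow> 'a) \<Rightarrow> 'a \<Rightarrow> ('a \<Rightarrow> 'a) \<Rightarrow> bool" where
  "semigroup_involution op e star \<longleftrightarrow>
     (\<forall>x y z. op (op x y) z = op x (op y z)) \<and>
     (\<forall>x. op e x = x \<and> op x e = x) \<and>
     bij star \<and> (\<forall>x. star (star x) = x) \<and>
     (\<forall>x y. star (op x y) = op (star y) (star x))"

definition quat_pos_def :: "('a \<Rightarrow> 'a \<Rightarrow> 'a) \<Rightarrow> ('a \<Rightarrow> 'a) \<Rightarrow> ('a \<Rightarrow> quat) \<Rightarrow> bool" where
  "quat_pos_def op star \<phi> \<longleftrightarrow>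
     (\<forall>(k::nat) (s::nat \<Rightarrow> 'a) (q::nat \<Rightarrow> quat). \<exists>r\<ge>0.
        (\<Sum>i<k. \<Sum>j<k. qcnj (q i) * \<phi> (op (star (s i)) (s j)) * q j) = qreal r)"

definition cplx_pos_def :: "quat \<Rightarrow> ('a \<Rightarrow> 'a \<Rightarrow> 'a) \<Rightarrow> ('a \<Rightarrow> 'a) \<Rightarrow> ('a \<Rightarrow> quat) \<Rightarrow> bool" where
  "cplx_pos_def I op star \<phi> \<longleftrightarrow>
     (\<forall>(k::nat) (s::nat \<Rightarrow> 'a) (c::nat \<Rightarrow> quat). (\<forall>i. c i \<in> cslice I) \<longrightarrow> (\<exists>r\<ge>0.
        (\<Sum>i<k. \<Sum>j<k. qcnj (c i) * c j * \<phi> (op (star (s i)) (s j))) = qreal r))"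

end

theory Submission imports Defs begin

lemma quat_eq_iff: "p = q \<longleftrightarrow> QRe p = QRe q \<and> Im1 p = Im1 q \<and> Im2 p = Im2 q \<and> Im3 p = Im3 q"
  by (cases p; cases q) auto

lemma qcomps[simp]:
  "QRe (p + q) = QRe p + QRe q" "Im1 (p + q) = Im1 p + Im1 q" "Im2 (p + q) = Im2 p + Im2 q" "Im3 (p + q) = Im3 p + Im3 q"
  "QRe (p - q) = QRe p - QRe q" "Im1 (p - q) = Im1 p - Im1 q" "Im2 (p - q) = Im2 p - Im2 q" "Im3 (p - q) = Im3 p - Im3 q"
  "QRe (- q) = - QRe q" "Im1 (- q) = - Im1 q" "Im2 (- q) = - Im2 q" "Im3 (- q) = - Im3 q"
  "QRe 0 = 0" "Im1 0 = 0" "Im2 0 = 0" "Im3 0 = 0"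
  "QRe 1 = 1" "Im1 1 = 0" "Im2 1 = 0" "Im3 1 = 0"
  "QRe (qreal r) = r" "Im1 (qreal r) = 0" "Im2 (qreal r) = 0" "Im3 (qreal r) = 0"
  "QRe (qcnj q) = QRe q" "Im1 (qcnj q) = - Im1 q" "Im2 (qcnj q) = - Im2 q" "Im3 (qcnj q) = - Im3 q"
  "QRe (p * q) = QRe p * QRe q - Im1 p * Im1 q - Im2 p * Im2 q - Im3 p * Im3 q"
  "Im1 (p * q) = QRe p * Im1 q + Im1 p * QRe q + Im2 p * Im3 q - Im3 p * Im2 q"
  "Im2 (p * q) = QRe p * Im2 q - Im1 p * Im3 q + Im2 p * QRe q + Im3 p * Im1 q"
  "Im3 (p * q) = QRe p * Im3 q + Im1 p * Im2 q - Im2 p * Im1 q + Im3 p * QRe q"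
  by (simp_all add: plus_quat_def minus_quat_def uminus_quat_def zero_quat_def one_quat_def
      times_quat_def qreal_def qcnj_def)

lemma qreal_comm: "qreal r * q = q * qreal r"
  by (simp add: quat_eq_iff)

lemma qcnj_add: "qcnj (p + q) = qcnj p + qcnj q" by (simp add: quat_eq_iff)
lemma qcnj_diff: "qcnj (p - q) = qcnj p - qcnj q" by (simp add: quat_eq_iff)
lemma qcnj_minus: "qcnj (- q) = - qcnj q" by (simp add: quat_eq_iff)
lemma qcnj_mult: "qcnj (p * q) = qcnj q * qcnj p" by (simp add: quat_eq_iff algebra_simps)
lemma qcnj_qcnj: "qcnj (qcnj q) = q" by (simp add: quat_eq_iff)
lemma qcnj_qreal: "qcnj (qreal r) = qreal r" by (simp add: quat_eq_iff)
lemma qcnj_sum: "qcnj (sum f A) = sum (\<lambda>x. qcnj (f x)) A"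
  by (induction A rule: infinite_finite_induct) (auto simp: qcnj_add quat_eq_iff)

lemma iu_facts:
  assumes "imag_unit I"
  shows "QRe I = 0" "(Im1 I)^2 + (Im2 I)^2 + (Im3 I)^2 = 1"
proof -
  from assms have c: "qcnj I = - I" and n: "qnorm I = 1" by (auto simp: imag_unit_def)
  from arg_cong[OF c, of QRe] show r: "QRe I = 0" by simp
  from n r show "(Im1 I)^2 + (Im2 I)^2 + (Im3 I)^2 = 1" by (simp add: qnorm_def)
qed

definition toC :: "quat \<Rightarrow> complex \<Rightarrow> quat" where
  "toC I z = qreal (Re z) + qreal (Im z) * I"

locale iu =
  fixes I :: quat
  assumes r0: "QRe I = 0" and n1: "(Im1 I)^2 + (Im2 I)^2 + (Im3 I)^2 = 1"
begin

lemma toC_comps[simp]: "QRe (toC I z) = Re z" "Im1 (toC I z) = Im z * Im1 I"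
  "Im2 (toC I z) = Im z * Im2 I" "Im3 (toC I z) = Im z * Im3 I"
  by (simp_all add: toC_def r0)

lemma II: "I * I = -1"
  using n1 by (simp add: quat_eq_iff r0 power2_eq_square algebra_simps)

lemma toC_add: "toC I (z + w) = toC I z + toC I w" by (simp add: quat_eq_iff algebra_simps)
lemma toC_diff: "toC I (z - w) = toC I z - toC I w" by (simp add: quat_eq_iff algebra_simps)
lemma toC_minus: "toC I (- z) = - toC I z" by (simp add: quat_eq_iff algebra_simps)
lemma toC_0: "toC I 0 = 0" by (simp add: quat_eq_iff)
lemma toC_mult: "toC I (z * w) = toC I z * toC I w"
proof -
  have "Im z * Im w = Im z * Im w * ((Im1 I)^2 + (Im2 I)^2 + (Im3 I)^2)" using n1 by simp
  then show ?thesis by (simp add: quat_eq_iff algebra_simps power2_eq_square)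
qed
lemma toC_cnj: "qcnj (toC I z) = toC I (cnj z)" by (simp add: quat_eq_iff)
lemma toC_of_real: "toC I (of_real r) = qreal r" by (simp add: quat_eq_iff)
lemma toC_sum: "toC I (sum f A) = sum (\<lambda>x. toC I (f x)) A"
  by (induction A rule: infinite_finite_induct) (auto simp: toC_add toC_0)
lemma toC_inj: assumes "toC I z = toC I w" shows "z = w"
proof -
  have h: "Re z = Re w" "Im z * Im1 I = Im w * Im1 I" "Im z * Im2 I = Im w * Im2 I" "Im z * Im3 I = Im w * Im3 I"
    using assms by (simp_all add: quat_eq_iff)
  have "Im z = Im z * ((Im1 I)^2 + (Im2 I)^2 + (Im3 I)^2)" using n1 by simp
  also have "\<dots> = (Im z * Im1 I) * Im1 I + (Im z * Im2 I) * Im2 I + (Im z * Im3 I) * Im3 I"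
    by (simp add: algebra_simps power2_eq_square)
  also have "\<dots> = (Im w * Im1 I) * Im1 I + (Im w * Im2 I) * Im2 I + (Im w * Im3 I) * Im3 I"
    by (simp only: h)
  also have "\<dots> = Im w * ((Im1 I)^2 + (Im2 I)^2 + (Im3 I)^2)"
    by (simp add: algebra_simps power2_eq_square)
  also have "\<dots> = Im w" using n1 by simp
  finally show ?thesis using h complex_eqI by blast
qed

lemma comm_toC: assumes "x * I = I * x" shows "\<exists>z. x = toC I z"
proof -
  let ?t = "Im1 x * Im1 I + Im2 x * Im2 I + Im3 x * Im3 I"
  have c: "Im2 x * Im3 I = Im3 x * Im2 I" "Im3 x * Im1 I = Im1 x * Im3 I" "Im1 x * Im2 I = Im2 x * Im1 I"
    using assms by (simp_all add: quat_eq_iff r0 algebra_simps)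
  have e1: "Im1 x = ?t * Im1 I"
  proof -
    have "Im1 x = Im1 x * ((Im1 I)^2 + (Im2 I)^2 + (Im3 I)^2)" using n1 by simp
    also have "\<dots> = ?t * Im1 I + Im2 I * (Im1 x * Im2 I - Im2 x * Im1 I) + Im3 I * (Im1 x * Im3 I - Im3 x * Im1 I)"
      by (simp add: algebra_simps power2_eq_square)
    finally show ?thesis using c by simp
  qed
  have e2: "Im2 x = ?t * Im2 I"
  proof -
    have "Im2 x = Im2 x * ((Im1 I)^2 + (Im2 I)^2 + (Im3 I)^2)" using n1 by simp
    also have "\<dots> = ?t * Im2 I + Im1 I * (Im2 x * Im1 I - Im1 x * Im2 I) + Im3 I * (Im2 x * Im3 I - Im3 x * Im2 I)"
      by (simp add: algebra_simps power2_eq_square)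
    finally show ?thesis using c by simp
  qed
  have e3: "Im3 x = ?t * Im3 I"
  proof -
    have "Im3 x = Im3 x * ((Im1 I)^2 + (Im2 I)^2 + (Im3 I)^2)" using n1 by simp
    also have "\<dots> = ?t * Im3 I + Im1 I * (Im3 x * Im1 I - Im1 x * Im3 I) + Im2 I * (Im3 x * Im2 I - Im2 x * Im3 I)"
      by (simp add: algebra_simps power2_eq_square)
    finally show ?thesis using c by simp
  qed
  have "x = toC I (Complex (QRe x) ?t)" using e1 e2 e3 by (simp add: quat_eq_iff)
  then show ?thesis by blast
qed


lemma cslice_eq: "cslice I = range (toC I)"
proof (intro set_eqI iffI)
  fix x assume "x \<in> cslice I"
  then obtain a b where "x = qreal a + qreal b * I" by (auto simp: cslice_def)
  then have "x = toC I (Complex a b)" by (simp add: toC_def)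
  then show "x \<in> range (toC I)" by blast
next
  fix x assume "x \<in> range (toC I)"
  then obtain z where "x = toC I z" by blast
  then show "x \<in> cslice I" by (auto simp: cslice_def toC_def)
qed

lemma J_exists: "\<exists>J. J * J = -1 \<and> I * J = - (J * I) \<and> qcnj J = - J"
proof (cases "Im1 I \<noteq> 0 \<or> Im2 I \<noteq> 0")
  case True
  define n where "n = sqrt ((Im1 I)^2 + (Im2 I)^2)"
  have np: "(Im1 I)^2 + (Im2 I)^2 > 0" using True by (auto simp: sum_power2_gt_zero_iff)
  have n2: "n * n = (Im1 I)^2 + (Im2 I)^2" using np unfolding n_def
    by (simp add: abs_of_nonneg)
  have nz: "n \<noteq> 0" using np n2 by auto
  define J where "J = Quat 0 (- Im2 I / n) (Im1 I / n) 0"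
  have "J * J = -1"
  proof -
    have "(Im2 I / n) * (Im2 I / n) + (Im1 I / n) * (Im1 I / n) = ((Im1 I)^2 + (Im2 I)^2) / (n * n)"
      by (simp add: add_divide_distrib power2_eq_square)
    also have "\<dots> = 1" using nz by (simp add: n2[symmetric])
    finally have "(Im2 I / n) * (Im2 I / n) + (Im1 I / n) * (Im1 I / n) = 1" .
    then show ?thesis by (simp add: J_def quat_eq_iff)
  qed
  moreover have "I * J = - (J * I)" by (simp add: J_def quat_eq_iff r0 algebra_simps)
  moreover have "qcnj J = - J" by (simp add: J_def quat_eq_iff)
  ultimately show ?thesis by blast
next
  case False
  define J where "J = Quat 0 1 0 0"
  have "J * J = -1" by (simp add: J_def quat_eq_iff)
  moreover have "I * J = - (J * I)" using False by (simp add: J_def quat_eq_iff r0 algebra_simps)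
  moreover have "qcnj J = - J" by (simp add: J_def quat_eq_iff)
  ultimately show ?thesis by blast
qed

end

lemma qreal_minus: "qreal (- b) = - qreal b" by (simp add: quat_eq_iff)

locale iuJ = iu +
  fixes J :: quat
  assumes JJ: "J * J = -1" and IJ: "I * J = - (J * I)" and cJ: "qcnj J = - J"
begin

lemma J_toC: "J * toC I z = toC I (cnj z) * J"
proof -
  have "J * toC I z = J * qreal (Re z) + J * qreal (Im z) * I"
    by (simp add: toC_def distrib_left mult.assoc)
  also have "\<dots> = qreal (Re z) * J + qreal (Im z) * (J * I)"
    by (simp add: qreal_comm mult.assoc)
  also have "\<dots> = qreal (Re z) * J + qreal (- Im z) * (I * J)"
    by (simp add: IJ qreal_minus)
  also have "\<dots> = toC I (cnj z) * J"
    by (simp add: toC_def distrib_right mult.assoc)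
  finally show ?thesis .
qed

lemma J_toC2: "J * (toC I z * x) = toC I (cnj z) * (J * x)"
  by (simp add: J_toC mult.assoc[symmetric])
lemma JJ2: "J * (J * x) = - x" by (simp add: JJ mult.assoc[symmetric])
lemma toC_mult2: "toC I a * (toC I b * x) = toC I (a * b) * x"
  by (simp add: toC_mult mult.assoc)

lemma II2: "I * (I * x) = - x" by (simp add: II mult.assoc[symmetric])

lemma decomp: "\<exists>a b. q = toC I a + toC I b * J"
proof -
  define q1 where "q1 = q - I * q * I"
  define q2 where "q2 = q + I * q * I"
  have "q1 * I = I * q1" by (simp add: q1_def algebra_simps II II2)
  then obtain z1 where z1: "q1 = toC I z1" using comm_toC by blast
  have a2: "I * q2 = - (q2 * I)" by (simp add: q2_def algebra_simps II II2)
  have "(- (q2 * J)) * I = I * (- (q2 * J))"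
  proof -
    have "I * (- (q2 * J)) = q2 * (I * J)" using a2 by (simp add: mult.assoc[symmetric])
    also have "\<dots> = (- (q2 * J)) * I" by (simp add: IJ mult.assoc)
    finally show ?thesis by simp
  qed
  then obtain z2 where z2: "- (q2 * J) = toC I z2" using comm_toC by blast
  have "toC I z2 * J = q2" using z2[symmetric] by (simp add: mult.assoc JJ)
  have h: "toC I (z1/2) = qreal (1/2) * q1" "toC I (z2/2) * J = qreal (1/2) * q2"
    using z1 z2 \<open>toC I z2 * J = q2\<close> by (auto simp: quat_eq_iff)
  have "q1 + q2 = q + q" by (simp add: q1_def q2_def)
  then have "qreal (1/2) * q1 + qreal (1/2) * q2 = qreal (1/2) * (q + q)"
    by (simp add: distrib_left[symmetric])
  also have "\<dots> = q" by (simp add: quat_eq_iff)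
  finally have "q = qreal (1/2) * q1 + qreal (1/2) * q2" by simp
  then show ?thesis using h by metis
qed

lemma term_eq:
  "qcnj (toC I a1 + toC I b1 * J) * toC I f * (toC I a2 + toC I b2 * J) =
   toC I (cnj a1 * f * a2 + b1 * cnj f * cnj b2) + toC I (cnj a1 * f * b2 - b1 * cnj f * cnj a2) * J"
proof -
  have c: "qcnj (toC I a1 + toC I b1 * J) = toC I (cnj a1) - toC I b1 * J"
    by (simp add: qcnj_add qcnj_mult cJ toC_cnj J_toC)
  have e: "(toC I (cnj a1) - toC I b1 * J) * toC I f * (toC I a2 + toC I b2 * J) =
     toC I (cnj a1) * toC I f * toC I a2 + toC I (cnj a1) * toC I f * toC I b2 * J
     - toC I b1 * (J * toC I f) * toC I a2 - toC I b1 * (J * toC I f) * toC I b2 * J"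
    by (simp add: algebra_simps)
  have t1: "toC I (cnj a1) * toC I f * toC I a2 = toC I (cnj a1 * f * a2)" by (simp add: toC_mult)
  have t2: "toC I (cnj a1) * toC I f * toC I b2 * J = toC I (cnj a1 * f * b2) * J" by (simp add: toC_mult)
  have t3: "toC I b1 * (J * toC I f) * toC I a2 = toC I (b1 * cnj f * cnj a2) * J"
  proof -
    have "toC I b1 * (J * toC I f) * toC I a2 = toC I b1 * toC I (cnj f) * (J * toC I a2)"
      by (simp add: J_toC mult.assoc)
    also have "\<dots> = toC I (b1 * cnj f * cnj a2) * J" by (simp add: J_toC mult.assoc toC_mult)
    finally show ?thesis .
  qed
  have t4: "toC I b1 * (J * toC I f) * toC I b2 * J = - toC I (b1 * cnj f * cnj b2)"
  proof -
    have "toC I b1 * (J * toC I f) * toC I b2 * J = toC I b1 * toC I (cnj f) * (J * toC I b2) * J"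
      by (simp add: J_toC mult.assoc)
    also have "\<dots> = toC I (b1 * cnj f * cnj b2) * (J * J)" by (simp add: J_toC mult.assoc toC_mult)
    also have "\<dots> = - toC I (b1 * cnj f * cnj b2)" by (simp add: JJ)
    finally show ?thesis .
  qed
  show ?thesis unfolding c e t1 t2 t3 t4 by (simp add: toC_add toC_diff algebra_simps)
qed

end

lemma herm:
  fixes F :: "nat \<Rightarrow> nat \<Rightarrow> complex" and k :: nat
  assumes R: "\<And>c. (\<Sum>i<k. \<Sum>j<k. cnj (c i) * c j * F i j) \<in> \<real>"
  shows "(\<Sum>i<k. \<Sum>j<k. cnj (x i) * y j * F i j) = cnj (\<Sum>i<k. \<Sum>j<k. cnj (y i) * x j * F i j)"
proof -
  define B where "B u v = (\<Sum>i<k. \<Sum>j<k. cnj (u i) * v j * F i j)" for u v :: "nat \<Rightarrow> complex"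
  have l1: "B (\<lambda>i. u i + v i) w = B u w + B v w" for u v w
    by (simp add: B_def algebra_simps sum.distrib)
  have l2: "B w (\<lambda>i. u i + v i) = B w u + B w v" for u v w
    by (simp add: B_def algebra_simps sum.distrib)
  have l3: "B (\<lambda>i. c * u i) w = cnj c * B u w" for u w c
    by (simp add: B_def sum_distrib_left algebra_simps)
  have l4: "B w (\<lambda>i. c * u i) = c * B w u" for u w c
    by (simp add: B_def sum_distrib_left algebra_simps)
  have Rb: "Im (B u u) = 0" for u using R[of u] unfolding B_def by (simp add: complex_is_Real_iff)
  have "B (\<lambda>i. x i + y i) (\<lambda>i. x i + y i) = B x x + B x y + B y x + B y y"
    by (simp add: l1 l2)
  then have a: "Im (B x y) + Im (B y x) = 0" using Rb[of x] Rb[of y] Rb[of "\<lambda>i. x i + y i"] by simp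
  have "B (\<lambda>i. x i + \<i> * y i) (\<lambda>i. x i + \<i> * y i) = B x x + \<i> * B x y - \<i> * B y x + B y y"
    by (simp add: l1 l2 l3 l4 algebra_simps)
  then have b: "Re (B x y) - Re (B y x) = 0" using Rb[of x] Rb[of y] Rb[of "\<lambda>i. x i + \<i> * y i"] by simp
  have "B x y = cnj (B y x)" using a b by (simp add: complex_eq_iff)
  then show ?thesis by (simp add: B_def)
qed


theorem mainTheorem6:
  fixes op :: "'a \<Rightarrow> 'a \<Rightarrow> 'a" and e :: 'a and star :: "'a \<Rightarrow> 'a"
    and I :: quat and \<phi> :: "'a \<Rightarrow> quat"
  assumes "semigroup_involution op e star"
    and "imag_unit I"
    and "\<forall>s. \<phi> s \<in> cslice I"
  shows "cplx_pos_def I op star \<phi> \<longleftrightarrow> quat_pos_def op star \<phi>"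
proof -
  interpret iu I using iu_facts[OF assms(2)] by unfold_locales auto
  obtain J where J: "J * J = -1" "I * J = - (J * I)" "qcnj J = - J" using J_exists by blast
  interpret iuJ I J using J by unfold_locales auto
  have "\<forall>s. \<exists>z. \<phi> s = toC I z" using assms(3) cslice_eq by auto
  then obtain f where f: "\<And>s. \<phi> s = toC I (f s)" by metis
  show ?thesis
  proof
    assume C: "cplx_pos_def I op star \<phi>"
    have CP: "\<exists>r\<ge>0. (\<Sum>i<k. \<Sum>j<k. cnj (c i) * c j * f (op (star (s i)) (s j))) = of_real r" for k :: nat and s :: "nat \<Rightarrow> 'a" and c :: "nat \<Rightarrow> complex"
    proof -
      have "\<And>i. toC I (c i) \<in> cslice I" using cslice_eq by auto
      from C[unfolded cplx_pos_def_def, rule_format, where k=k and s=s and c="\<lambda>i. toC I (c i)", OF this] obtain r where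
        r: "r \<ge> 0" "(\<Sum>i<k. \<Sum>j<k. qcnj (toC I (c i)) * toC I (c j) * \<phi> (op (star (s i)) (s j))) = qreal r"
        by blast
      have "toC I (\<Sum>i<k. \<Sum>j<k. cnj (c i) * c j * f (op (star (s i)) (s j))) = toC I (of_real r)"
        using r(2) by (simp add: toC_sum toC_mult toC_cnj f toC_of_real)
      then show ?thesis using r(1) toC_inj by blast
    qed
    show "quat_pos_def op star \<phi>" unfolding quat_pos_def_def
    proof (intro allI)
      fix k :: nat and s :: "nat \<Rightarrow> 'a" and q :: "nat \<Rightarrow> quat"
      define F where "F i j = f (op (star (s i)) (s j))" for i j :: nat
      from decomp have "\<forall>i. \<exists>a b. q i = toC I a + toC I b * J" by blast
      then obtain a b where ab: "\<And>i. q i = toC I (a i) + toC I (b i) * J" by metis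
      have Real: "(\<Sum>i<k. \<Sum>j<k. cnj (c i) * c j * F i j) \<in> \<real>" for c :: "nat \<Rightarrow> complex"
        using CP[where k=k and s=s and c=c] unfolding F_def by (metis Reals_of_real)
      have H: "(\<Sum>i<k. \<Sum>j<k. cnj (a i) * b j * F i j) = cnj (\<Sum>i<k. \<Sum>j<k. cnj (b i) * a j * F i j)"
        by (rule herm[OF Real])
      obtain r1 where r1: "r1 \<ge> 0" "(\<Sum>i<k. \<Sum>j<k. cnj (a i) * a j * F i j) = of_real r1"
        using CP[where k=k and s=s and c=a] unfolding F_def by blast
      obtain r2 where r2: "r2 \<ge> 0" "(\<Sum>i<k. \<Sum>j<k. cnj (b i) * b j * F i j) = of_real r2"
        using CP[where k=k and s=s and c=b] unfolding F_def by blast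
      have "(\<Sum>i<k. \<Sum>j<k. qcnj (q i) * \<phi> (op (star (s i)) (s j)) * q j) =
        (\<Sum>i<k. \<Sum>j<k. toC I (cnj (a i) * F i j * a j + b i * cnj (F i j) * cnj (b j))
           + toC I (cnj (a i) * F i j * b j - b i * cnj (F i j) * cnj (a j)) * J)"
        by (simp add: ab f F_def term_eq)
      also have "\<dots> = toC I (\<Sum>i<k. \<Sum>j<k. cnj (a i) * F i j * a j + b i * cnj (F i j) * cnj (b j))
           + toC I (\<Sum>i<k. \<Sum>j<k. cnj (a i) * F i j * b j - b i * cnj (F i j) * cnj (a j)) * J"
        by (simp add: sum.distrib toC_sum sum_distrib_right toC_add)
      also have "(\<Sum>i<k. \<Sum>j<k. cnj (a i) * F i j * a j + b i * cnj (F i j) * cnj (b j))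
          = (\<Sum>i<k. \<Sum>j<k. cnj (a i) * a j * F i j) + cnj (\<Sum>i<k. \<Sum>j<k. cnj (b i) * b j * F i j)"
        by (simp add: sum.distrib algebra_simps)
      also have "(\<Sum>i<k. \<Sum>j<k. cnj (a i) * F i j * b j - b i * cnj (F i j) * cnj (a j))
          = (\<Sum>i<k. \<Sum>j<k. cnj (a i) * b j * F i j) - cnj (\<Sum>i<k. \<Sum>j<k. cnj (b i) * a j * F i j)"
        by (simp add: sum_subtractf algebra_simps)
      also have "\<dots> = 0" using H by simp
      finally have "(\<Sum>i<k. \<Sum>j<k. qcnj (q i) * \<phi> (op (star (s i)) (s j)) * q j) = qreal (r1 + r2)"
        using r1 r2 by (simp add: toC_0 flip: toC_of_real)
      then show "\<exists>r\<ge>0. (\<Sum>i<k. \<Sum>j<k. qcnj (q i) * \<phi> (op (star (s i)) (s j)) * q j) = qreal r"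
        using r1 r2 by (intro exI[of _ "r1 + r2"]) simp
    qed
  next
    assume Q: "quat_pos_def op star \<phi>"
    show "cplx_pos_def I op star \<phi>" unfolding cplx_pos_def_def
    proof (intro allI impI)
      fix k :: nat and s :: "nat \<Rightarrow> 'a" and c :: "nat \<Rightarrow> quat" assume cs: "\<forall>i. c i \<in> cslice I"
      then have "\<forall>i. \<exists>z. c i = toC I z" using cslice_eq by auto
      then obtain g where g: "\<And>i. c i = toC I (g i)" by metis
      from Q[unfolded quat_pos_def_def, rule_format, where k=k and s=s and q=c] obtain r where
        r: "r \<ge> 0" "(\<Sum>i<k. \<Sum>j<k. qcnj (c i) * \<phi> (op (star (s i)) (s j)) * c j) = qreal r" by blast
      have t: "qcnj (c i) * c j * \<phi> x = qcnj (c i) * \<phi> x * c j" for i j x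
      proof -
        have "qcnj (c i) * c j * \<phi> x = toC I (cnj (g i) * g j * f x)" by (simp add: g f toC_cnj toC_mult)
        also have "\<dots> = toC I (cnj (g i) * f x * g j)" by (simp add: mult_ac)
        also have "\<dots> = qcnj (c i) * \<phi> x * c j" by (simp add: g f toC_cnj toC_mult)
        finally show ?thesis .
      qed
      show "\<exists>r\<ge>0. (\<Sum>i<k. \<Sum>j<k. qcnj (c i) * c j * \<phi> (op (star (s i)) (s j))) = qreal r"
        using r by (auto simp add: t)
    qed
  qed
qed

end
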